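(* Let $L,V,W,K,T>0$, $\pi\in(0,1)$, $\bar K=\frac{W}{V+W}K$, $C=V\bar K$. Write $\frac{L}{V}=\theta_1T$ with $\theta_1=j_1+\alpha_1$, $j_1=\lfloor \frac{L}{VT}\rfloor$, $0\le\alpha_1<1$, and $\frac{L}{W}=\theta_2T$ with $\theta_2=j_2+\alpha_2$, $j_2=\lfloor\frac{L}{WT}\rfloor$, $0\le\alpha_2<1$. Define $$k_1=\frac{j_1+\min\{\alpha_1/\pi,1\}}{j_1+\alpha_1}\,\pi\bar K,\qquad k_2=K-\frac{j_2+\min\{\alpha_2/\pi,1\}}{j_2+\alpha_2}\,\pi\frac{C}{W}.$$ Then $$\pi\bar K\le k_1\le\bar K\le k_2\le K-\pi\frac{C}{W}.$$ Moreover, $k_1=\pi\bar K$ if and only if $\alpha_1=0$; $k_1=\bar K$ if and only if $\pi T\ge \frac LV$; $k_2=K-\pi\frac CW$ if and only if $\alpha_2=0$; and $k_2=\bar K$ if and only if $\pi T\ge\frac LW$. *)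

theory Defs
  imports Complex_Main
begin

end

theory Submission
  imports Defs
begin

lemma key:
  fixes th p a :: real and j :: int
  assumes th: "th > 0" and j: "j = \<lfloor>th\<rfloor>" and a: "th = j + a" and p: "0 < p" "p < 1"
  defines "r \<equiv> (j + min (a / p) 1) / (j + a) * p"
  shows "p \<le> r \<and> r \<le> 1 \<and> (r = p \<longleftrightarrow> a = 0) \<and> (r = 1 \<longleftrightarrow> th \<le> p)"
proof -
  have a0: "a \<ge> 0" and a1: "a < 1" using a j by linarith+
  have j0: "j \<ge> 0" using j th by simp
  have pos: "j + a > 0" using a th by simp
  have pm: "min (a / p) 1 * p = min a p" using p
    by (auto simp: min_def field_simps)
  have r: "r = (j * p + min a p) / (j + a)"
    unfolding r_def using pm by (simp add: field_simps)
  have jp: "j * p \<le> j" using p j0 by (simp add: mult_left_le)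
  have pa: "p * a \<le> a" using p a0 by (simp add: mult_left_le_one_le)
  have pa2: "p * a \<le> p" using p a1 by (simp add: mult_left_le)
  have n1: "j * p + min a p \<ge> p * (j + a)"
    using pa pa2 by (simp add: min_def algebra_simps)
  have n1s: "a > 0 \<Longrightarrow> j * p + min a p > p * (j + a)"
  proof -
    assume "a > 0"
    hence "p * a < a" "p * a < p" using p a1 by simp_all
    thus ?thesis by (simp add: min_def algebra_simps)
  qed
  have n2: "j * p + min a p \<le> j + a" using jp by (simp add: min_def)
  have n2e: "j * p + min a p = j + a \<longleftrightarrow> th \<le> p"
  proof
    assume h: "j * p + min a p = j + a"
    have "j * p \<le> j" using p j0 by (simp add: mult_left_le)
    hence "j * p = j" "min a p = a" using h n2 by (smt (verit) min.cobounded1)+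
    hence "j = 0" "a \<le> p" using p by (auto simp: min_def split: if_splits)
    thus "th \<le> p" using a by simp
  next
    assume "th \<le> p"
    hence "j = 0" using j p th by (simp add: floor_eq_iff)
    thus "j * p + min a p = j + a" using a \<open>th \<le> p\<close> by simp
  qed
  define N where "N = j * p + min a p"
  define D where "D = j + a"
  have D0: "D > 0" using pos D_def by simp
  have e1: "p \<le> N / D \<longleftrightarrow> p * D \<le> N" using D0 by (simp add: pos_le_divide_eq)
  have e2: "N / D \<le> 1 \<longleftrightarrow> N \<le> D" using D0 by simp
  have e3: "N / D = p \<longleftrightarrow> N = p * D" using D0 by (auto simp: field_simps)
  have e4: "N / D = 1 \<longleftrightarrow> N = D" using D0 by auto
  have z: "a = 0 \<Longrightarrow> N = p * D" unfolding N_def D_def using p by (simp add: min_def)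
  have "N = p * D \<longleftrightarrow> a = 0"
  proof
    assume "N = p * D" thus "a = 0" using n1s a0 unfolding N_def D_def by fastforce
  qed (rule z)
  thus ?thesis unfolding r N_def[symmetric] D_def[symmetric] e1 e2 e3 e4
    using n1 n2 n2e unfolding N_def D_def by simp
qed

theorem lemma3p1:
  fixes L V W K T p Kbar C \<theta>\<^sub>1 \<theta>\<^sub>2 \<alpha>\<^sub>1 \<alpha>\<^sub>2 k\<^sub>1 k\<^sub>2 :: real
    and j\<^sub>1 j\<^sub>2 :: int
  assumes pos: "L > 0" "V > 0" "W > 0" "K > 0" "T > 0"
    and p: "0 < p" "p < 1"
    and Kbar_def: "Kbar = W / (V + W) * K"
    and C_def: "C = V * Kbar"
    and th1: "L / V = \<theta>\<^sub>1 * T" and j1: "j\<^sub>1 = \<lfloor>L / (V * T)\<rfloor>" and a1: "\<theta>\<^sub>1 = j\<^sub>1 + \<alpha>\<^sub>1"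
    and th2: "L / W = \<theta>\<^sub>2 * T" and j2: "j\<^sub>2 = \<lfloor>L / (W * T)\<rfloor>" and a2: "\<theta>\<^sub>2 = j\<^sub>2 + \<alpha>\<^sub>2"
    and k1_def: "k\<^sub>1 = (j\<^sub>1 + min (\<alpha>\<^sub>1 / p) 1) / (j\<^sub>1 + \<alpha>\<^sub>1) * p * Kbar"
    and k2_def: "k\<^sub>2 = K - (j\<^sub>2 + min (\<alpha>\<^sub>2 / p) 1) / (j\<^sub>2 + \<alpha>\<^sub>2) * p * (C / W)"
  shows "p * Kbar \<le> k\<^sub>1 \<and> k\<^sub>1 \<le> Kbar \<and> Kbar \<le> k\<^sub>2 \<and> k\<^sub>2 \<le> K - p * (C / W)
    \<and> (k\<^sub>1 = p * Kbar \<longleftrightarrow> \<alpha>\<^sub>1 = 0)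
    \<and> (k\<^sub>1 = Kbar \<longleftrightarrow> p * T \<ge> L / V)
    \<and> (k\<^sub>2 = K - p * (C / W) \<longleftrightarrow> \<alpha>\<^sub>2 = 0)
    \<and> (k\<^sub>2 = Kbar \<longleftrightarrow> p * T \<ge> L / W)"
proof -
  have t1: "\<theta>\<^sub>1 = L / (V * T)" using th1 pos by (simp add: field_simps)
  have t2: "\<theta>\<^sub>2 = L / (W * T)" using th2 pos by (simp add: field_simps)
  have t1p: "\<theta>\<^sub>1 > 0" "\<theta>\<^sub>2 > 0" using t1 t2 pos by simp_all
  define r1 where "r1 = (j\<^sub>1 + min (\<alpha>\<^sub>1 / p) 1) / (j\<^sub>1 + \<alpha>\<^sub>1) * p"
  define r2 where "r2 = (j\<^sub>2 + min (\<alpha>\<^sub>2 / p) 1) / (j\<^sub>2 + \<alpha>\<^sub>2) * p"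
  have R1: "p \<le> r1 \<and> r1 \<le> 1 \<and> (r1 = p \<longleftrightarrow> \<alpha>\<^sub>1 = 0) \<and> (r1 = 1 \<longleftrightarrow> \<theta>\<^sub>1 \<le> p)"
    unfolding r1_def by (rule key[OF t1p(1) _ a1 p]) (simp add: t1 j1)
  have R2: "p \<le> r2 \<and> r2 \<le> 1 \<and> (r2 = p \<longleftrightarrow> \<alpha>\<^sub>2 = 0) \<and> (r2 = 1 \<longleftrightarrow> \<theta>\<^sub>2 \<le> p)"
    unfolding r2_def by (rule key[OF t1p(2) _ a2 p]) (simp add: t2 j2)
  have k1: "k\<^sub>1 = r1 * Kbar" using k1_def r1_def by simp
  have k2: "k\<^sub>2 = K - r2 * (C / W)" using k2_def r2_def by simp
  have Kb: "Kbar > 0" using pos Kbar_def by simp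
  have CW1: "C / W = K - Kbar" using pos Kbar_def C_def by (simp add: field_simps)
  have CW2: "C / W > 0" using pos Kb C_def by simp
  have e1: "p * T \<ge> L / V \<longleftrightarrow> \<theta>\<^sub>1 \<le> p" using th1 pos by simp
  have e2: "p * T \<ge> L / W \<longleftrightarrow> \<theta>\<^sub>2 \<le> p" using th2 pos by simp
  show ?thesis
  proof -
    define D where "D = C / W"
    have D: "D > 0" "Kbar = K - D" using CW1 CW2 D_def by auto
    have a: "p * Kbar \<le> r1 * Kbar" "r1 * Kbar \<le> Kbar" using R1 Kb by (simp_all add: mult_right_mono)
    have b: "p * D \<le> r2 * D" "r2 * D \<le> D" using R2 D by (simp_all add: mult_right_mono)
    have c: "r1 * Kbar = p * Kbar \<longleftrightarrow> r1 = p" "r1 * Kbar = Kbar \<longleftrightarrow> r1 = 1"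
      "r2 * D = p * D \<longleftrightarrow> r2 = p" "r2 * D = D \<longleftrightarrow> r2 = 1" using Kb D by auto
    have d: "(K - r2 * D = K - p * D) = (r2 * D = p * D)" "(K - r2 * D = Kbar) = (r2 * D = D)"
      using D by auto
    show ?thesis unfolding k1 k2 e1 e2 D_def[symmetric] d c
      using a b R1 R2 D by (intro conjI) linarith+
  qed
qed

end
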